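(* Let $\mathfrak a$ be a finite-dimensional real vector space, $\mathcal R$ a lattice in $\mathfrak a$, and $E$ a finite subset of $\widehat{\mathcal R}=\widehat{\mathfrak a}/\mathcal R^\vee$. For each $\nu\in E$ let $p_\nu$ be a polynomial function on $\mathfrak a$, and for $T\in\mathcal R$ put $$\phi(T)=\sum_{\nu\in E}p_\nu(T)e^{\langle\nu,T\rangle}.$$ Let $C$ be a non-empty open cone in $\mathfrak a$ and $T_\star\in\mathcal R$. If $\phi(T)\to 0$ as $\|T\|\to\infty$ with $T\in T_\star+(C\cap\mathcal R)$, then $p_\nu=0$ for every $\nu\in E$.
   Context: $\widehat{\mathfrak a}=i\mathfrak a^*$ (identified with the Pontryagin dual of $\mathfrak a$ via the exponential), $\mathcal R^\vee=\{\Lambda\in i\mathfrak a^*:\langle\Lambda,X\rangle\in 2\pi i\mathbb Z \text{ for all } X\in\mathcal R\}$, so that $\widehat{\mathcal R}=i\mathfrak a^*/\mathcal R^\vee$ is the Pontryagin dual of $\mathcal R$; for $\nu\in\widehat{\mathcal R}$ and $T\in\mathcal R$ the number $e^{\langle\nu,T\rangle}$ is well defined. $\|\cdot\|$ is any norm on $\mathfrak a$. *)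

theory Defs
  imports "HOL-Analysis.Analysis"
begin

definition lattice :: "'a::euclidean_space set \<Rightarrow> bool" where
  "lattice L \<longleftrightarrow> (\<exists>B. independent B \<and> span B = UNIV \<and>
      L = {(\<Sum>b\<in>B. of_int (k b) *\<^sub>R b) | k. True})"

text \<open>Elements of i a^* are written i*lam with lam a real linear functional on a.
  Two such functionals define the same element of the dual of the lattice L
  iff they differ by an element of the dual lattice, i.e. lam T - lam' T lies in 2 pi Z
  for all T in L.\<close>
definition same_char :: "'a::euclidean_space set \<Rightarrow> ('a \<Rightarrow> real) \<Rightarrow> ('a \<Rightarrow> real) \<Rightarrow> bool" where
  "same_char L lam lam' \<longleftrightarrow> (\<forall>T\<in>L. \<exists>k::int. lam T - lam' T = 2 * pi * of_int k)"

text \<open>e^{<nu,T>} for nu = i*lam.\<close>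
definition char_val :: "('a::euclidean_space \<Rightarrow> real) \<Rightarrow> 'a \<Rightarrow> complex" where
  "char_val lam T = cis (lam T)"

end

theory Submission
  imports Defs "HOL-Library.Real_Mod"
begin

lemma avg_lemma:
  fixes W :: "complex set" and d :: "complex \<Rightarrow> complex"
  assumes "finite W" "\<forall>w\<in>W. norm w = 1"
    "(\<lambda>n. \<Sum>w\<in>W. d w * w ^ n) \<longlonglongrightarrow> 0"
  shows "\<forall>w\<in>W. d w = 0"
  using assms
proof (induction W arbitrary: d rule: finite_induct)
  case empty then show ?case by simp
next
  case (insert u W)
  define a where "a = (\<lambda>n. \<Sum>w\<in>insert u W. d w * w ^ n)"
  have a0: "a \<longlonglongrightarrow> 0" using insert.prems(2) by (simp add: a_def)
  have "(\<lambda>n. a (Suc n) - u * a n) \<longlonglongrightarrow> 0 - u * 0"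
    by (intro tendsto_diff tendsto_mult tendsto_const a0 LIMSEQ_Suc)
  moreover have "a (Suc n) - u * a n = (\<Sum>w\<in>W. (d w * (w - u)) * w ^ n)" for n
    using insert.hyps by (simp add: a_def sum_distrib_left algebra_simps sum_subtractf[symmetric])
  ultimately have "(\<lambda>n. \<Sum>w\<in>W. (d w * (w - u)) * w ^ n) \<longlonglongrightarrow> 0" by simp
  with insert.IH[of "\<lambda>w. d w * (w - u)"] insert.prems(1)
  have "\<forall>w\<in>W. d w * (w - u) = 0" by simp
  with insert.hyps have dW: "\<forall>w\<in>W. d w = 0" by auto
  then have "a n = d u * u ^ n" for n by (simp add: a_def insert.hyps)
  then have "(\<lambda>n. norm (a n)) = (\<lambda>n. norm (d u))"
    using insert.prems(1) by (simp add: norm_mult norm_power)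
  moreover have "(\<lambda>n. norm (a n)) \<longlonglongrightarrow> 0" using tendsto_norm_zero[OF a0] .
  ultimately have "d u = 0" by (simp add: LIMSEQ_const_iff)
  with dW show ?case by simp
qed

lemma lemma_1d:
  fixes W :: "complex set" and c :: "complex \<Rightarrow> nat \<Rightarrow> complex"
  assumes "finite W" "\<forall>w\<in>W. norm w = 1"
    "(\<lambda>n. \<Sum>w\<in>W. (\<Sum>i\<le>N. c w i * of_nat n ^ i) * w ^ n) \<longlonglongrightarrow> 0"
  shows "\<forall>w\<in>W. \<forall>i\<le>N. c w i = 0"
  using assms(3)
proof (induction N arbitrary: c)
  case 0
  then show ?case using avg_lemma[OF assms(1,2), of "\<lambda>w. c w 0"] by simp
next
  case (Suc N)
  define a where "a = (\<lambda>n. \<Sum>w\<in>W. (\<Sum>i\<le>Suc N. c w i * of_nat n ^ i) * w ^ n)"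
  define r where "r = (\<lambda>n. \<Sum>w\<in>W. \<Sum>i\<le>N. c w i * ((of_nat n ^ i / of_nat n ^ Suc N) * w ^ n))"
  have a0: "a \<longlonglongrightarrow> 0" using Suc.prems by (simp add: a_def)
  have inv0: "(\<lambda>n. 1 / (of_nat n ^ Suc N :: complex)) \<longlonglongrightarrow> 0"
  proof (rule Lim_null_comparison[where g="\<lambda>n. 1 / real n"])
    show "\<forall>\<^sub>F n in sequentially. norm (1 / (of_nat n ^ Suc N :: complex)) \<le> 1 / real n"
    proof (rule eventually_sequentiallyI[of 1])
      fix n :: nat assume "1 \<le> n"
      then have "real n \<le> real n ^ Suc N" by (metis One_nat_def le_Suc_eq linorder_not_le nat_less_le not_less_eq_eq of_nat_le_1_iff of_nat_power of_nat_le_iff power_increasing power_one_right zero_less_Suc)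
      moreover have "norm (1 / (of_nat n ^ Suc N :: complex)) = 1 / real n ^ Suc N"
        by (simp add: norm_divide norm_power del: power_Suc)
      ultimately show "norm (1 / (of_nat n ^ Suc N :: complex)) \<le> 1 / real n"
        using \<open>1 \<le> n\<close> by (simp add: frac_le del: power_Suc)
    qed
    show "(\<lambda>n. 1 / real n) \<longlonglongrightarrow> 0" by (rule lim_1_over_n)
  qed
  have an: "(\<lambda>n. a n * (1 / of_nat n ^ Suc N)) \<longlonglongrightarrow> 0 * 0"
    by (intro tendsto_mult a0 inv0)
  have term0: "(\<lambda>n. c w i * ((of_nat n ^ i / of_nat n ^ Suc N) * w ^ n)) \<longlonglongrightarrow> 0"
    if "w \<in> W" "i \<le> N" for w i
  proof -
    have "(\<lambda>n. (of_nat n ^ i / of_nat n ^ Suc N) * w ^ n :: complex) \<longlonglongrightarrow> 0"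
    proof (rule Lim_null_comparison[where g="\<lambda>n. 1 / real n"])
      show "\<forall>\<^sub>F n in sequentially. norm ((of_nat n ^ i / of_nat n ^ Suc N) * w ^ n :: complex) \<le> 1 / real n"
      proof (rule eventually_sequentiallyI[of 1])
        fix n :: nat assume n1: "1 \<le> n"
        have "real n ^ i \<le> real n ^ N" using n1 that(2) by (simp add: power_increasing)
        then have "real n ^ i / real n ^ Suc N \<le> real n ^ N / real n ^ Suc N"
          by (rule divide_right_mono) simp_all
        also have "\<dots> = 1 / real n" using n1 by (simp add: field_simps)
        finally have le: "real n ^ i / real n ^ Suc N \<le> 1 / real n" .
        have "norm ((of_nat n ^ i / of_nat n ^ Suc N) * w ^ n :: complex) = real n ^ i / real n ^ Suc N"
          using assms(2) that(1) by (simp add: norm_mult norm_divide norm_power del: power_Suc)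
        with le show "norm ((of_nat n ^ i / of_nat n ^ Suc N) * w ^ n :: complex) \<le> 1 / real n"
          by simp
      qed
      show "(\<lambda>n. 1 / real n) \<longlonglongrightarrow> 0" by (rule lim_1_over_n)
    qed
    then show ?thesis using tendsto_mult[OF tendsto_const[of "c w i"]] by fastforce
  qed
  have r0: "r \<longlonglongrightarrow> 0"
    unfolding r_def using term0 by (intro tendsto_null_sum) auto
  have eq: "a n * (1 / of_nat n ^ Suc N) = r n + (\<Sum>w\<in>W. c w (Suc N) * w ^ n)" if "n \<ge> 1" for n
  proof -
    have "a n * (1 / of_nat n ^ Suc N) = (\<Sum>w\<in>W. \<Sum>i\<le>Suc N. c w i * of_nat n ^ i * w ^ n * (1 / of_nat n ^ Suc N))"
      unfolding a_def by (simp only: sum_distrib_right)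
    also have "\<dots> = (\<Sum>w\<in>W. \<Sum>i\<le>Suc N. c w i * ((of_nat n ^ i / of_nat n ^ Suc N) * w ^ n))"
      by (intro sum.cong refl) (simp add: divide_inverse mult_ac del: power_Suc)
    also have "\<dots> = (\<Sum>w\<in>W. (\<Sum>i\<le>N. c w i * ((of_nat n ^ i / of_nat n ^ Suc N) * w ^ n)) + c w (Suc N) * w ^ n)"
      using that by (intro sum.cong refl) (simp del: power_Suc)
    also have "\<dots> = r n + (\<Sum>w\<in>W. c w (Suc N) * w ^ n)"
      by (simp add: r_def sum.distrib del: power_Suc)
    finally show ?thesis .
  qed
  have "(\<lambda>n. a n * (1 / of_nat n ^ Suc N) - r n) \<longlonglongrightarrow> 0 * 0 - 0"
    by (intro tendsto_diff an r0)
  then have lim1: "(\<lambda>n. a n * (1 / of_nat n ^ Suc N) - r n) \<longlonglongrightarrow> 0" by simp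
  have ev: "\<forall>\<^sub>F n in sequentially. a n * (1 / of_nat n ^ Suc N) - r n = (\<Sum>w\<in>W. c w (Suc N) * w ^ n)"
    by (rule eventually_sequentiallyI[of 1]) (metis eq add_diff_cancel_left')
  have "(\<lambda>n. \<Sum>w\<in>W. c w (Suc N) * w ^ n) \<longlonglongrightarrow> 0"
    by (rule Lim_transform_eventually[OF lim1 ev])
  then have top: "\<forall>w\<in>W. c w (Suc N) = 0" using avg_lemma[OF assms(1,2), of "\<lambda>w. c w (Suc N)"] by blast
  then have "(\<lambda>n. \<Sum>w\<in>W. (\<Sum>i\<le>N. c w i * of_nat n ^ i) * w ^ n) = a"
    by (auto simp: a_def intro!: sum.cong)
  with a0 have "\<forall>w\<in>W. \<forall>i\<le>N. c w i = 0" using Suc.IH by simp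
  with top show ?case by (auto simp: le_Suc_eq)
qed

lemma poly_zero_nat:
  fixes c :: "nat \<Rightarrow> complex"
  assumes "\<forall>n::nat. (\<Sum>i\<le>N. c i * of_nat n ^ i) = 0"
  shows "\<forall>i\<le>N. c i = 0"
  using lemma_1d[where W="{1}" and N=N and c="\<lambda>w. c"] assms by simp

lemma pad_sum:
  fixes c :: "nat \<Rightarrow> 'b::comm_ring_1"
  assumes "N0 \<le> N"
  shows "(\<Sum>i\<le>N. (if i \<le> N0 then c i else 0) * x ^ i) = (\<Sum>i\<le>N0. c i * x ^ i)"
  by (rule sum.mono_neutral_cong_right) (use assms in auto)

lemma poly_line0:
  fixes f :: "'a::euclidean_space \<Rightarrow> complex"
  assumes "polynomial_function f"
  shows "\<exists>c N. \<forall>t::real. f (a + t *\<^sub>R v) = (\<Sum>i\<le>N. c i * of_real t ^ i)"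
proof -
  define g where "g = (\<lambda>t::real. f (a + t *\<^sub>R v))"
  have "polynomial_function (\<lambda>t::real. a + t *\<^sub>R v)"
    by (intro polynomial_function_add polynomial_function_const polynomial_function_bounded_linear
        bounded_linear_scaleR_left)
  then have pg: "polynomial_function g"
    using polynomial_function_compose[OF _ assms] by (simp add: g_def o_def)
  have "real_polynomial_function (Re \<circ> g)" "real_polynomial_function (Im \<circ> g)"
    using pg bounded_linear_Re bounded_linear_Im unfolding polynomial_function_def by blast+
  then obtain a1 n1 a2 n2 where h1: "Re \<circ> g = (\<lambda>x. \<Sum>i\<le>n1. a1 i * x ^ i)"
    and h2: "Im \<circ> g = (\<lambda>x. \<Sum>i\<le>n2. a2 i * x ^ i)"
    unfolding real_polynomial_function_iff_sum by blast
  define N where "N = max n1 n2"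
  define b1 where "b1 i = (if i \<le> n1 then a1 i else 0)" for i
  define b2 where "b2 i = (if i \<le> n2 then a2 i else 0)" for i
  have "g t = (\<Sum>i\<le>N. (complex_of_real (b1 i) + \<i> * complex_of_real (b2 i)) * of_real t ^ i)" for t
  proof -
    have r: "Re (g t) = (\<Sum>i\<le>N. b1 i * t ^ i)"
      using fun_cong[OF h1, of t] pad_sum[of n1 N a1 t] by (simp add: N_def b1_def)
    have i: "Im (g t) = (\<Sum>i\<le>N. b2 i * t ^ i)"
      using fun_cong[OF h2, of t] pad_sum[of n2 N a2 t] by (simp add: N_def b2_def)
    have "g t = complex_of_real (Re (g t)) + \<i> * complex_of_real (Im (g t))"
      by (simp add: complex_eq_iff)
    also have "\<dots> = (\<Sum>i\<le>N. (complex_of_real (b1 i) + \<i> * complex_of_real (b2 i)) * of_real t ^ i)"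
      unfolding r i by (simp add: sum_distrib_left sum.distrib[symmetric] algebra_simps)
    finally show ?thesis .
  qed
  then have "\<forall>t. f (a + t *\<^sub>R v) = (\<Sum>i\<le>N. (complex_of_real (b1 i) + \<i> * complex_of_real (b2 i)) * of_real t ^ i)"
    by (simp add: g_def)
  then show ?thesis
    by (intro exI[of _ "\<lambda>i. complex_of_real (b1 i) + \<i> * complex_of_real (b2 i)"] exI[of _ N])
qed

lemma poly_line:
  fixes f :: "'a::euclidean_space \<Rightarrow> complex"
  assumes "polynomial_function f"
  shows "\<exists>N0. \<forall>N\<ge>N0. \<exists>c. \<forall>t::real. f (a + t *\<^sub>R v) = (\<Sum>i\<le>N. c i * of_real t ^ i)"
proof -
  obtain c N0 where h: "\<forall>t::real. f (a + t *\<^sub>R v) = (\<Sum>i\<le>N0. c i * of_real t ^ i)"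
    using poly_line0[OF assms] by blast
  show ?thesis
  proof (rule exI[of _ N0], intro allI impI)
    fix N assume "N0 \<le> N"
    then show "\<exists>c'. \<forall>t::real. f (a + t *\<^sub>R v) = (\<Sum>i\<le>N. c' i * of_real t ^ i)"
      using h pad_sum[of N0 N c] by metis
  qed
qed

lemma char_add: "linear lam \<Longrightarrow> char_val lam (x + y) = char_val lam x * char_val lam y"
  by (simp add: char_val_def linear_add cis_mult)

lemma char_nat: "linear lam \<Longrightarrow> char_val lam (of_nat n *\<^sub>R v) = char_val lam v ^ n"
  using Complex.DeMoivre[of "lam v" n] by (simp add: char_val_def linear_scale)

lemma char_norm [simp]: "norm (char_val lam x) = 1"
  by (simp add: char_val_def)

lemma group_line:
  fixes S :: "('a::euclidean_space \<Rightarrow> real) set" and p :: "('a \<Rightarrow> real) \<Rightarrow> 'a \<Rightarrow> complex"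
  assumes fin: "finite S" and lin: "\<forall>lam\<in>S. linear lam"
    and pf: "\<forall>lam\<in>S. polynomial_function (p lam)"
    and lim: "(\<lambda>n. \<Sum>lam\<in>S. p lam (A + of_nat n *\<^sub>R v) * char_val lam (A + of_nat n *\<^sub>R v)) \<longlonglongrightarrow> 0"
  shows "(\<Sum>lam\<in>{lam\<in>S. char_val lam v = w}. p lam A * char_val lam A) = 0"
proof -
  have "\<forall>lam\<in>S. \<exists>N0. \<forall>N\<ge>N0. \<exists>c. \<forall>t::real. p lam (A + t *\<^sub>R v) = (\<Sum>i\<le>N. c i * of_real t ^ i)"
    using pf poly_line by blast
  then obtain N0f where N0f: "\<forall>lam\<in>S. \<forall>N\<ge>N0f lam. \<exists>c. \<forall>t::real. p lam (A + t *\<^sub>R v) = (\<Sum>i\<le>N. c i * of_real t ^ i)"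
    by metis
  define N where "N = sum N0f S"
  have "\<forall>lam\<in>S. \<exists>c. \<forall>t::real. p lam (A + t *\<^sub>R v) = (\<Sum>i\<le>N. c i * of_real t ^ i)"
    using N0f fin by (auto simp: N_def intro: member_le_sum)
  then obtain cf where cf: "\<forall>lam\<in>S. \<forall>t::real. p lam (A + t *\<^sub>R v) = (\<Sum>i\<le>N. cf lam i * of_real t ^ i)"
    by metis
  define h where "h lam = char_val lam v" for lam
  define W where "W = h ` S"
  define Sw where "Sw w = {lam\<in>S. h lam = w}" for w
  define C where "C w i = (\<Sum>lam\<in>Sw w. cf lam i * char_val lam A)" for w i
  have finW: "finite W" using fin by (simp add: W_def)
  have nW: "\<forall>w\<in>W. norm w = 1" by (auto simp: W_def h_def)
  have eqn: "(\<Sum>w\<in>W. (\<Sum>i\<le>N. C w i * of_nat n ^ i) * w ^ n) =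
        (\<Sum>lam\<in>S. p lam (A + of_nat n *\<^sub>R v) * char_val lam (A + of_nat n *\<^sub>R v))" for n
  proof -
    have "(\<Sum>lam\<in>S. p lam (A + of_nat n *\<^sub>R v) * char_val lam (A + of_nat n *\<^sub>R v))
        = (\<Sum>lam\<in>S. (\<Sum>i\<le>N. cf lam i * of_nat n ^ i) * char_val lam A * h lam ^ n)"
    proof (rule sum.cong[OF refl])
      fix lam assume l: "lam \<in> S"
      have "p lam (A + of_nat n *\<^sub>R v) = (\<Sum>i\<le>N. cf lam i * of_nat n ^ i)"
        using cf l by (metis of_real_of_nat_eq)
      moreover have "char_val lam (A + of_nat n *\<^sub>R v) = char_val lam A * h lam ^ n"
        using lin l by (simp add: char_add char_nat h_def)
      ultimately show "p lam (A + of_nat n *\<^sub>R v) * char_val lam (A + of_nat n *\<^sub>R v) =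
          (\<Sum>i\<le>N. cf lam i * of_nat n ^ i) * char_val lam A * h lam ^ n" by (simp add: mult_ac)
    qed
    also have "\<dots> = (\<Sum>w\<in>W. \<Sum>lam\<in>Sw w. (\<Sum>i\<le>N. cf lam i * of_nat n ^ i) * char_val lam A * h lam ^ n)"
      unfolding W_def Sw_def by (rule sum.image_gen[OF fin])
    also have "\<dots> = (\<Sum>w\<in>W. (\<Sum>i\<le>N. C w i * of_nat n ^ i) * w ^ n)"
    proof (rule sum.cong[OF refl])
      fix w assume "w \<in> W"
      have "(\<Sum>lam\<in>Sw w. (\<Sum>i\<le>N. cf lam i * of_nat n ^ i) * char_val lam A * h lam ^ n)
          = (\<Sum>lam\<in>Sw w. (\<Sum>i\<le>N. cf lam i * of_nat n ^ i) * char_val lam A * w ^ n)"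
        by (rule sum.cong) (auto simp: Sw_def)
      also have "\<dots> = (\<Sum>lam\<in>Sw w. (\<Sum>i\<le>N. cf lam i * of_nat n ^ i) * char_val lam A) * w ^ n"
        by (simp add: sum_distrib_right)
      also have "\<dots> = (\<Sum>lam\<in>Sw w. \<Sum>i\<le>N. cf lam i * char_val lam A * of_nat n ^ i) * w ^ n"
        by (intro arg_cong[where f="\<lambda>x. x * w ^ n"] sum.cong refl) (simp add: sum_distrib_right sum_distrib_left mult_ac)
      also have "\<dots> = (\<Sum>i\<le>N. \<Sum>lam\<in>Sw w. cf lam i * char_val lam A * of_nat n ^ i) * w ^ n"
        by (subst sum.swap) simp
      also have "\<dots> = (\<Sum>i\<le>N. C w i * of_nat n ^ i) * w ^ n"
        by (simp add: C_def sum_distrib_right)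
      finally show "(\<Sum>lam\<in>Sw w. (\<Sum>i\<le>N. cf lam i * of_nat n ^ i) * char_val lam A * h lam ^ n)
          = (\<Sum>i\<le>N. C w i * of_nat n ^ i) * w ^ n" .
    qed
    finally show ?thesis by simp
  qed
  have "\<forall>w\<in>W. \<forall>i\<le>N. C w i = 0"
    by (rule lemma_1d[OF finW nW]) (use lim in \<open>simp add: eqn\<close>)
  then have C0: "\<forall>w\<in>W. C w 0 = 0" by simp
  have p0: "p lam A = cf lam 0" if "lam \<in> S" for lam
  proof -
    have "p lam A = (\<Sum>i\<le>N. cf lam i * of_real 0 ^ i)"
      using cf that by (metis add.right_neutral scaleR_zero_left)
    also have "\<dots> = cf lam 0" by (induction N) auto
    finally show ?thesis .
  qed
  have "(\<Sum>lam\<in>{lam\<in>S. char_val lam v = w}. p lam A * char_val lam A) = C w 0"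
    unfolding C_def Sw_def h_def by (rule sum.cong) (auto simp: p0)
  moreover have "C w 0 = 0"
  proof (cases "w \<in> W")
    case True then show ?thesis using C0 by simp
  next
    case False then have "Sw w = {}" by (auto simp: Sw_def W_def)
    then show ?thesis by (simp add: C_def)
  qed
  ultimately show ?thesis by simp
qed

lemma extend_zero:
  fixes f :: "'a::euclidean_space \<Rightarrow> complex" and V :: "'a set"
  assumes pf: "polynomial_function f" and "finite V"
  shows "(\<forall>n::'a\<Rightarrow>nat. f (a + (\<Sum>v\<in>V. of_nat (n v) *\<^sub>R v)) = 0) \<Longrightarrow> f (a + (\<Sum>v\<in>V. t v *\<^sub>R v)) = 0"
  using assms(2)
proof (induction V arbitrary: a rule: finite_induct)
  case empty then show ?case by simp
next
  case (insert u V)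
  have "f ((a + t u *\<^sub>R u) + (\<Sum>v\<in>V. t v *\<^sub>R v)) = 0"
  proof (rule insert.IH, rule allI)
    fix n :: "'a \<Rightarrow> nat"
    obtain c N where cN: "\<forall>s::real. f ((a + (\<Sum>v\<in>V. of_nat (n v) *\<^sub>R v)) + s *\<^sub>R u) = (\<Sum>i\<le>N. c i * of_real s ^ i)"
      using poly_line0[OF pf] by blast
    have "(\<Sum>i\<le>N. c i * of_nat m ^ i) = 0" for m :: nat
    proof -
      have "(\<Sum>v\<in>insert u V. of_nat ((n(u := m)) v) *\<^sub>R v) = of_nat m *\<^sub>R u + (\<Sum>v\<in>V. of_nat (n v) *\<^sub>R v)"
        using insert.hyps by (auto simp: sum.insert intro!: sum.cong)
      then have "f ((a + (\<Sum>v\<in>V. of_nat (n v) *\<^sub>R v)) + real m *\<^sub>R u) = 0"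
        using insert.prems[rule_format, of "n(u := m)"] by (simp add: algebra_simps)
      then show ?thesis using cN by (metis of_real_of_nat_eq)
    qed
    then have "\<forall>i\<le>N. c i = 0" by (intro poly_zero_nat) simp
    then have "f ((a + (\<Sum>v\<in>V. of_nat (n v) *\<^sub>R v)) + t u *\<^sub>R u) = 0" using cN by simp
    then show "f (a + t u *\<^sub>R u + (\<Sum>v\<in>V. of_nat (n v) *\<^sub>R v)) = 0" by (simp add: algebra_simps)
  qed
  then show ?case using insert.hyps by (simp add: algebra_simps)
qed

theorem mainTheorem2:
  fixes R :: "'a::euclidean_space set"
    and E :: "('a \<Rightarrow> real) set"
    and p :: "('a \<Rightarrow> real) \<Rightarrow> 'a \<Rightarrow> complex"
    and C :: "'a set"
    and Tstar :: 'a
  assumes "lattice R"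
    and "finite E"
    and "\<forall>lam\<in>E. linear lam"
    and "\<forall>lam\<in>E. \<forall>lam'\<in>E. same_char R lam lam' \<longrightarrow> lam = lam'"
    and "\<forall>lam\<in>E. polynomial_function (p lam)"
    and "open C" and "C \<noteq> {}" and "\<forall>x\<in>C. \<forall>t>0. t *\<^sub>R x \<in> C"
    and "Tstar \<in> R"
    and "\<forall>\<epsilon>>0. \<exists>M. \<forall>T \<in> (\<lambda>c. Tstar + c) ` (C \<inter> R). M \<le> norm T \<longrightarrow>
            norm (\<Sum>lam\<in>E. p lam T * char_val lam T) < \<epsilon>"
  shows "\<forall>lam\<in>E. \<forall>x. p lam x = 0"
proof -
  note lat = assms(1) and finE = assms(2) and linE = assms(3) and inj = assms(4)
    and pfE = assms(5) and openC = assms(6) and neC = assms(7) and cone = assms(8)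
    and hyp = assms(10)
  obtain B where indB: "independent B" and spB: "span B = UNIV"
    and RB: "R = {(\<Sum>b\<in>B. of_int (k b) *\<^sub>R b) | k. True}"
    using lat unfolding lattice_def by blast
  have finB: "finite B" using indB by (rule finiteI_independent)
  have Rmem: "(\<Sum>b\<in>B. of_int (k b) *\<^sub>R b) \<in> R" for k unfolding RB by blast
  have Radd: "x + y \<in> R" if xy: "x \<in> R" "y \<in> R" for x y
  proof -
    obtain k1 k2 where "x = (\<Sum>b\<in>B. of_int (k1 b) *\<^sub>R b)" "y = (\<Sum>b\<in>B. of_int (k2 b) *\<^sub>R b)"
      using xy RB by blast
    then have "x + y = (\<Sum>b\<in>B. of_int (k1 b + k2 b) *\<^sub>R b)"
      by (simp add: sum.distrib[symmetric] scaleR_add_left)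
    then show ?thesis using Rmem[of "\<lambda>b. k1 b + k2 b"] by simp
  qed
  have Rnat: "of_nat m *\<^sub>R x \<in> R" if xR: "x \<in> R" for x m
  proof -
    obtain k where "x = (\<Sum>b\<in>B. of_int (k b) *\<^sub>R b)" using xR RB by blast
    then have "of_nat m *\<^sub>R x = (\<Sum>b\<in>B. of_int (int m * k b) *\<^sub>R b)"
      by (simp add: scaleR_sum_right)
    then show ?thesis using Rmem[of "\<lambda>b. int m * k b"] by simp
  qed
  have RBB: "b \<in> R" if bB: "b \<in> B" for b
  proof -
    have "b = (\<Sum>b'\<in>B. of_int (if b' = b then 1 else 0) *\<^sub>R b')"
    proof -
      have "(\<Sum>b'\<in>B. of_int (if b' = b then 1 else 0) *\<^sub>R b') = (\<Sum>b'\<in>B. if b' = b then b' else 0)"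
        by (rule sum.cong) auto
      also have "\<dots> = b" using bB finB by simp
      finally show ?thesis by simp
    qed
    then show ?thesis using Rmem[of "\<lambda>b'. if b' = b then 1 else 0"] by simp
  qed
  obtain x0 where x0: "x0 \<in> C" using neC by blast
  obtain r where r0: "r > 0" and rC: "ball x0 r \<subseteq> C"
    using openC x0 unfolding open_contains_ball by blast
  define K where "K = {z. \<exists>s>0. inverse s *\<^sub>R z \<in> ball x0 r}"
  have KC: "z \<in> C" if "z \<in> K" for z
  proof -
    obtain s where s: "s > 0" "inverse s *\<^sub>R z \<in> ball x0 r" using \<open>z \<in> K\<close> K_def by blast
    then have "s *\<^sub>R (inverse s *\<^sub>R z) \<in> C" using rC cone by blast
    then show ?thesis using s by simp
  qed
  have Kadd: "z1 + z2 \<in> K" if "z1 \<in> K" "z2 \<in> K" for z1 z2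
  proof -
    obtain s1 where s1: "s1 > 0" "inverse s1 *\<^sub>R z1 \<in> ball x0 r" using \<open>z1 \<in> K\<close> K_def by blast
    obtain s2 where s2: "s2 > 0" "inverse s2 *\<^sub>R z2 \<in> ball x0 r" using \<open>z2 \<in> K\<close> K_def by blast
    have "(s1 / (s1 + s2)) *\<^sub>R (inverse s1 *\<^sub>R z1) + (s2 / (s1 + s2)) *\<^sub>R (inverse s2 *\<^sub>R z2) \<in> ball x0 r"
    proof (rule convexD[OF convex_ball s1(2) s2(2)])
      have "s1 + s2 > 0" using s1 s2 by simp
      then show "s1 / (s1 + s2) + s2 / (s1 + s2) = 1" by (simp add: add_divide_distrib[symmetric])
    qed (use s1 s2 in auto)
    moreover have "(s1 / (s1 + s2)) *\<^sub>R (inverse s1 *\<^sub>R z1) + (s2 / (s1 + s2)) *\<^sub>R (inverse s2 *\<^sub>R z2)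
        = inverse (s1 + s2) *\<^sub>R (z1 + z2)"
    proof -
      have e1: "s1 / (s1 + s2) * inverse s1 = inverse (s1 + s2)" using s1 s2 by (simp add: field_simps)
      have e2: "s2 / (s1 + s2) * inverse s2 = inverse (s1 + s2)" using s1 s2 by (simp add: field_simps)
      show ?thesis by (simp only: scaleR_scaleR e1 e2 scaleR_add_right)
    qed
    ultimately show ?thesis using s1 s2 unfolding K_def
      by (intro CollectI exI[of _ "s1 + s2"]) simp
  qed
  have Kscale: "c *\<^sub>R z \<in> K" if "z \<in> K" "c > 0" for z c
  proof -
    obtain s where s: "s > 0" "inverse s *\<^sub>R z \<in> ball x0 r" using \<open>z \<in> K\<close> K_def by blast
    have eq: "inverse (c * s) *\<^sub>R (c *\<^sub>R z) = inverse s *\<^sub>R z" using \<open>c > 0\<close> by simp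
    show ?thesis unfolding K_def
    proof (intro CollectI exI[of _ "c * s"] conjI)
      show "c * s > 0" using s \<open>c > 0\<close> by simp
      show "inverse (c * s) *\<^sub>R (c *\<^sub>R z) \<in> ball x0 r" by (subst eq) (rule s(2))
    qed
  qed
  have Kball: "z \<in> K" if "s > 0" "dist (s *\<^sub>R x0) z < s * r" for s z
  proof -
    have "dist x0 (inverse s *\<^sub>R z) = inverse s * dist (s *\<^sub>R x0) z"
    proof -
      have "x0 - inverse s *\<^sub>R z = inverse s *\<^sub>R (s *\<^sub>R x0 - z)" using \<open>s > 0\<close> by (simp add: algebra_simps)
      then show ?thesis using \<open>s > 0\<close> by (simp add: dist_norm)
    qed
    also have "\<dots> < r" using that by (simp add: field_simps)
    finally show ?thesis unfolding K_def using \<open>s > 0\<close> by auto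
  qed
  define P where "P = K \<inter> R"
  have PC: "P \<subseteq> C \<inter> R" using KC by (auto simp: P_def)
  have Pstep: "a + of_nat m *\<^sub>R v \<in> P" if "a \<in> P" "v \<in> P" for a v m
  proof (cases "m = 0")
    case True then show ?thesis using that by simp
  next
    case False
    then have "of_nat m *\<^sub>R v \<in> K" using that Kscale by (auto simp: P_def)
    then have "a + of_nat m *\<^sub>R v \<in> K" using that Kadd by (auto simp: P_def)
    moreover have "a + of_nat m *\<^sub>R v \<in> R" using that Radd Rnat by (auto simp: P_def)
    ultimately show ?thesis by (simp add: P_def)
  qed
  define M0 where "M0 = (\<Sum>b\<in>B. norm b)"
  have M0ge: "norm b \<le> M0" if "b \<in> B" for b
    unfolding M0_def using finB that by (intro member_le_sum) auto
  have M0nn: "M0 \<ge> 0" unfolding M0_def by (simp add: sum_nonneg)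
  define s where "s = (2 * M0 + 1) / r"
  have s0: "s > 0" using r0 M0nn by (simp add: s_def)
  have sr: "s * r = 2 * M0 + 1" using r0 by (simp add: s_def)
  have "s *\<^sub>R x0 \<in> span B" using spB by simp
  then obtain u where u: "s *\<^sub>R x0 = (\<Sum>b\<in>B. u b *\<^sub>R b)"
    using span_finite[OF finB] by auto
  define w where "w = (\<Sum>b\<in>B. of_int \<lfloor>u b\<rfloor> *\<^sub>R b)"
  have wR: "w \<in> R" unfolding w_def by (rule Rmem)
  have dw: "dist (s *\<^sub>R x0) w \<le> M0"
  proof -
    have "s *\<^sub>R x0 - w = (\<Sum>b\<in>B. (u b - of_int \<lfloor>u b\<rfloor>) *\<^sub>R b)"
      by (simp add: u w_def sum_subtractf[symmetric] scaleR_diff_left)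
    then have "dist (s *\<^sub>R x0) w = norm (\<Sum>b\<in>B. (u b - of_int \<lfloor>u b\<rfloor>) *\<^sub>R b)"
      by (simp add: dist_norm)
    also have "\<dots> \<le> (\<Sum>b\<in>B. norm ((u b - of_int \<lfloor>u b\<rfloor>) *\<^sub>R b))" by (rule norm_sum)
    also have "\<dots> \<le> (\<Sum>b\<in>B. norm b)"
    proof (rule sum_mono)
      fix b
      have "\<bar>u b - of_int \<lfloor>u b\<rfloor>\<bar> \<le> 1" by linarith
      then show "norm ((u b - of_int \<lfloor>u b\<rfloor>) *\<^sub>R b) \<le> norm b"
        by (simp add: mult_left_le_one_le)
    qed
    finally show ?thesis by (simp add: M0_def)
  qed
  have wP: "w \<in> P"
  proof -
    have "dist (s *\<^sub>R x0) w < s * r" using dw sr M0nn by simp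
    then show ?thesis using Kball[OF s0] wR by (simp add: P_def)
  qed
  have wbP: "w + b \<in> P" if bB: "b \<in> B" for b
  proof -
    have "dist (s *\<^sub>R x0) (w + b) \<le> dist (s *\<^sub>R x0) w + norm b"
      by (metis dist_norm dist_triangle2 add_diff_cancel_left' norm_minus_commute)
    also have "\<dots> \<le> 2 * M0" using dw M0ge[OF bB] by simp
    finally have "dist (s *\<^sub>R x0) (w + b) < s * r" using sr by simp
    then show ?thesis using Kball[OF s0] Radd[OF wR RBB[OF bB]] by (simp add: P_def)
  qed
  have sep: "\<exists>v\<in>P. char_val lam v \<noteq> char_val lam' v"
    if l: "lam \<in> E" "lam' \<in> E" "lam \<noteq> lam'" for lam lam'
  proof (rule ccontr)
    assume "\<not> ?thesis"
    then have eqP: "\<forall>v\<in>P. char_val lam v = char_val lam' v" by blast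
    have linl: "linear lam" "linear lam'" using linE l by auto
    have "\<exists>m::int. lam b - lam' b = of_int m * (2 * pi)" if bB: "b \<in> B" for b
    proof -
      have "char_val lam w * char_val lam b = char_val lam (w + b)" by (simp add: char_add[OF linl(1)])
      also have "\<dots> = char_val lam' (w + b)" using eqP wbP[OF bB] by blast
      also have "\<dots> = char_val lam' w * char_val lam' b" by (simp add: char_add[OF linl(2)])
      finally have "char_val lam w * char_val lam b = char_val lam' w * char_val lam' b" .
      moreover have "char_val lam w = char_val lam' w" "char_val lam w \<noteq> 0"
        using eqP wP by (auto simp: char_val_def)
      ultimately have "cis (lam b) = cis (lam' b)" by (simp add: char_val_def)
      then have "cis (lam b - lam' b) = 1" by (simp add: cis_divide[symmetric])
      then show ?thesis by (simp add: cis_eq_1_iff)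
    qed
    then obtain mf where mf: "\<forall>b\<in>B. lam b - lam' b = of_int (mf b) * (2 * pi)" by metis
    have "same_char R lam lam'"
      unfolding same_char_def
    proof
      fix T assume "T \<in> R"
      then obtain k where k: "T = (\<Sum>b\<in>B. of_int (k b) *\<^sub>R b)" using RB by blast
      have "lam T - lam' T = (\<Sum>b\<in>B. of_int (k b) * (lam b - lam' b))"
        unfolding k by (simp add: linear_sum[OF linl(1)] linear_sum[OF linl(2)] linear_scale[OF linl(1)]
            linear_scale[OF linl(2)] sum_subtractf[symmetric] algebra_simps)
      also have "\<dots> = 2 * pi * of_int (\<Sum>b\<in>B. k b * mf b)"
        using mf by (simp add: sum_distrib_left mult_ac)
      finally show "\<exists>k::int. lam T - lam' T = 2 * pi * of_int k" by blast
    qed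
    then show False using inj l by blast
  qed
  obtain v0 where v0P: "v0 \<in> P" and v00: "v0 \<noteq> 0"
  proof (cases "w = 0")
    case False then show ?thesis using that wP by blast
  next
    case True
    have "B \<noteq> {}"
    proof
      assume "B = {}"
      then have "(UNIV :: 'a set) = {0}" using spB by simp
      moreover obtain e :: 'a where "e \<in> Basis" using nonempty_Basis by blast
      ultimately show False by (metis UNIV_I nonzero_Basis singletonD)
    qed
    then obtain b where bB: "b \<in> B" by blast
    have "b \<noteq> 0" using indB bB dependent_zero by blast
    then show ?thesis using that wbP[OF bB] True by simp
  qed
  define Z where "Z S \<longleftrightarrow> (\<forall>a\<in>P. (\<Sum>lam\<in>S. p lam (Tstar + a) * char_val lam (Tstar + a)) = 0)" for S
  have split: "Z {lam\<in>S. char_val lam v = c}"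
    if SE: "S \<subseteq> E" and vP: "v \<in> P"
      and lim: "\<forall>a\<in>P. (\<lambda>n. \<Sum>lam\<in>S. p lam (Tstar + a + of_nat n *\<^sub>R v) * char_val lam (Tstar + a + of_nat n *\<^sub>R v)) \<longlonglongrightarrow> 0"
    for S v c
    unfolding Z_def
  proof
    fix a assume "a \<in> P"
    show "(\<Sum>lam\<in>{lam\<in>S. char_val lam v = c}. p lam (Tstar + a) * char_val lam (Tstar + a)) = 0"
      by (rule group_line) (use SE finE linE pfE lim \<open>a \<in> P\<close> in \<open>auto intro: finite_subset\<close>)
  qed
  have claim0: "finite S \<Longrightarrow> S \<subseteq> E \<Longrightarrow> Z S \<Longrightarrow> \<forall>lam\<in>S. \<forall>a\<in>P. p lam (Tstar + a) = 0" for S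
  proof (induction S rule: finite_psubset_induct)
    case (psubset S)
    show ?case
    proof (cases "\<exists>l1\<in>S. \<exists>l2\<in>S. l1 \<noteq> l2")
      case True
      then obtain l1 l2 where l12: "l1 \<in> S" "l2 \<in> S" "l1 \<noteq> l2" by blast
      then obtain v where vP: "v \<in> P" and vne: "char_val l1 v \<noteq> char_val l2 v"
        using sep psubset.prems(1) by blast
      have lim: "\<forall>a\<in>P. (\<lambda>n. \<Sum>lam\<in>S. p lam (Tstar + a + of_nat n *\<^sub>R v) * char_val lam (Tstar + a + of_nat n *\<^sub>R v)) \<longlonglongrightarrow> 0"
      proof
        fix a assume aP: "a \<in> P"
        have "(\<Sum>lam\<in>S. p lam (Tstar + a + of_nat n *\<^sub>R v) * char_val lam (Tstar + a + of_nat n *\<^sub>R v)) = 0" for n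
          using psubset.prems(2) Pstep[OF aP vP, of n] unfolding Z_def by (simp add: add.assoc)
        then show "(\<lambda>n. \<Sum>lam\<in>S. p lam (Tstar + a + of_nat n *\<^sub>R v) * char_val lam (Tstar + a + of_nat n *\<^sub>R v)) \<longlonglongrightarrow> 0"
          by simp
      qed
      show ?thesis
      proof (intro ballI)
        fix mu a assume muS: "mu \<in> S" and aP: "a \<in> P"
        define S' where "S' = {lam\<in>S. char_val lam v = char_val mu v}"
        have "S' \<subseteq> S" by (auto simp: S'_def)
        moreover have "l1 \<notin> S' \<or> l2 \<notin> S'" using vne by (auto simp: S'_def)
        ultimately have "S' \<subset> S" using l12 by blast
        moreover have "S' \<subseteq> E" using psubset.prems(1) by (auto simp: S'_def)
        moreover have "Z S'" unfolding S'_def by (rule split[OF psubset.prems(1) vP lim])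
        moreover have "mu \<in> S'" using muS by (simp add: S'_def)
        ultimately show "p mu (Tstar + a) = 0" using psubset.IH aP by blast
      qed
    next
      case False
      show ?thesis
      proof (intro ballI)
        fix mu a assume muS: "mu \<in> S" and aP: "a \<in> P"
        then have "S = {mu}" using False by blast
        then have "p mu (Tstar + a) * char_val mu (Tstar + a) = 0"
          using psubset.prems(2) aP unfolding Z_def by simp
        moreover have "char_val mu (Tstar + a) \<noteq> 0" by (simp add: char_val_def)
        ultimately show "p mu (Tstar + a) = 0" by simp
      qed
    qed
  qed
  have claim: "S \<subseteq> E \<Longrightarrow> Z S \<Longrightarrow> \<forall>lam\<in>S. \<forall>a\<in>P. p lam (Tstar + a) = 0" for S
    using claim0 finE finite_subset by blast
  have limE: "\<forall>a\<in>P. (\<lambda>n. \<Sum>lam\<in>E. p lam (Tstar + a + of_nat n *\<^sub>R v0) * char_val lam (Tstar + a + of_nat n *\<^sub>R v0)) \<longlonglongrightarrow> 0"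
  proof
    fix a assume aP: "a \<in> P"
    show "(\<lambda>n. \<Sum>lam\<in>E. p lam (Tstar + a + of_nat n *\<^sub>R v0) * char_val lam (Tstar + a + of_nat n *\<^sub>R v0)) \<longlonglongrightarrow> 0"
    proof (rule LIMSEQ_I)
      fix e :: real assume "e > 0"
      then obtain M where M: "\<forall>T \<in> (\<lambda>c. Tstar + c) ` (C \<inter> R). M \<le> norm T \<longrightarrow>
            norm (\<Sum>lam\<in>E. p lam T * char_val lam T) < e" using hyp by blast
      have nv: "norm v0 > 0" using v00 by simp
      obtain n0 :: nat where n0: "real n0 \<ge> (\<bar>M\<bar> + norm (Tstar + a)) / norm v0"
        using real_arch_simple by blast
      show "\<exists>no. \<forall>n\<ge>no. norm ((\<Sum>lam\<in>E. p lam (Tstar + a + of_nat n *\<^sub>R v0) * char_val lam (Tstar + a + of_nat n *\<^sub>R v0)) - 0) < e"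
      proof (intro exI allI impI)
        fix n assume "n \<ge> n0"
        then have "real n \<ge> (\<bar>M\<bar> + norm (Tstar + a)) / norm v0" using n0 by linarith
        then have "real n * norm v0 \<ge> \<bar>M\<bar> + norm (Tstar + a)" using nv by (simp add: field_simps)
        moreover have "norm (Tstar + a + of_nat n *\<^sub>R v0) \<ge> real n * norm v0 - norm (Tstar + a)"
        proof -
          have "norm (of_nat n *\<^sub>R v0) = norm ((Tstar + a + of_nat n *\<^sub>R v0) - (Tstar + a))" by simp
          also have "\<dots> \<le> norm (Tstar + a + of_nat n *\<^sub>R v0) + norm (Tstar + a)" by (rule norm_triangle_ineq4)
          finally show ?thesis by simp
        qed
        ultimately have Mle: "M \<le> norm (Tstar + a + of_nat n *\<^sub>R v0)" by linarith
        have mem: "Tstar + a + of_nat n *\<^sub>R v0 \<in> (\<lambda>c. Tstar + c) ` (C \<inter> R)"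
          using Pstep[OF aP v0P, of n] PC by (auto simp: add.assoc)
        from M[rule_format, OF mem Mle] show "norm ((\<Sum>lam\<in>E. p lam (Tstar + a + of_nat n *\<^sub>R v0) * char_val lam (Tstar + a + of_nat n *\<^sub>R v0)) - 0) < e"
          by simp
      qed
    qed
  qed
  have zeroP: "\<forall>a\<in>P. p mu (Tstar + a) = 0" if muE: "mu \<in> E" for mu
  proof -
    define S' where "S' = {lam\<in>E. char_val lam v0 = char_val mu v0}"
    have "Z S'" unfolding S'_def by (rule split[OF _ v0P limE]) simp
    moreover have "S' \<subseteq> E" "mu \<in> S'" using muE by (auto simp: S'_def)
    ultimately show ?thesis using claim by blast
  qed
  have Psum: "x + (\<Sum>v\<in>V. of_nat (n v) *\<^sub>R v) \<in> P" if "finite V" "V \<subseteq> P" "x \<in> P" for V x n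
    using that
  proof (induction V rule: finite_induct)
    case empty then show ?case by simp
  next
    case (insert u V)
    then have "(x + (\<Sum>v\<in>V. of_nat (n v) *\<^sub>R v)) + of_nat (n u) *\<^sub>R u \<in> P"
      by (intro Pstep) auto
    then show ?case using insert.hyps by (simp add: algebra_simps)
  qed
  define V where "V = insert w ((\<lambda>b. w + b) ` B)"
  have finV: "finite V" using finB by (simp add: V_def)
  have VP: "V \<subseteq> P" using wP wbP by (auto simp: V_def)
  have "B \<subseteq> span V"
  proof
    fix b assume "b \<in> B"
    then have "(w + b) - w \<in> span V" by (intro span_diff span_base) (auto simp: V_def)
    then show "b \<in> span V" by simp
  qed
  then have "span B \<subseteq> span V" by (metis span_mono span_span)
  then have spV: "span V = UNIV" using spB by blast
  show ?thesis
  proof (intro ballI allI)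
    fix mu x assume muE: "mu \<in> E"
    have "x - (Tstar + w) \<in> span V" using spV by simp
    then obtain t where t: "x - (Tstar + w) = (\<Sum>v\<in>V. t v *\<^sub>R v)"
      using span_finite[OF finV] by auto
    have "p mu ((Tstar + w) + (\<Sum>v\<in>V. t v *\<^sub>R v)) = 0"
    proof (rule extend_zero[OF _ finV])
      show "polynomial_function (p mu)" using pfE muE by blast
      show "\<forall>n. p mu (Tstar + w + (\<Sum>v\<in>V. of_nat (n v) *\<^sub>R v)) = 0"
        using zeroP[OF muE] Psum[OF finV VP wP] by (simp add: add.assoc)
    qed
    then show "p mu x = 0" using t by (metis add.commute diff_add_cancel)
  qed
qed

end
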